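(* Let $k\ge 1$ and let $\mathcal{M}=\{q_1,\dots,q_k\}$ be a finite set of prime numbers (the prime $2$ is allowed). Then there exists $n_{\mathcal{M}}\in\mathbb{N}$ such that for every integer $N\ge n_{\mathcal{M}}$ there exists a sequence of $N$ consecutive integers $a,a+1,\dots,a+N-1$ such that none of them is relatively prime to the product of all the others. Moreover, for each member $x$ of the sequence, the greatest common divisor of $x$ and the product of all the other members is divisible by some prime $p$ with $p\notin\mathcal{M}$. *)

theory Defs
  imports "HOL-Computational_Algebra.Primes"
begin

end

theory Submission
  imports Defs "HOL-Number_Theory.Number_Theory" "HOL-Library.FuncSet" "HOL-Real_Asymp.Real_Asymp"
begin


lemma ln_fact_mangoldt:
  "ln (fact n :: real) = (\<Sum>m\<le>n. mangoldt m * real (n div m))"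
proof (induction n)
  case 0
  then show ?case by simp
next
  case (Suc n)
  have split: "real (Suc n div m) = real (n div m) + (if m dvd Suc n then 1 else 0)" if "m > 0" for m
    using that by (auto simp: div_Suc dvd_eq_mod_eq_0)
  have "(\<Sum>m\<le>Suc n. mangoldt m * real (Suc n div m)) =
        (\<Sum>m\<le>Suc n. mangoldt m * real (n div m) + (if m dvd Suc n then mangoldt m else 0))"
  proof (intro sum.cong refl)
    fix m assume "m \<in> {..Suc n}"
    show "mangoldt m * real (Suc n div m) = mangoldt m * real (n div m) + (if m dvd Suc n then mangoldt m else 0)"
      by (cases "m = 0") (auto simp: split algebra_simps)
  qed
  also have "\<dots> = (\<Sum>m\<le>Suc n. mangoldt m * real (n div m)) + (\<Sum>m\<le>Suc n. if m dvd Suc n then mangoldt m else 0)"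
    by (rule sum.distrib)
  also have "(\<Sum>m\<le>Suc n. mangoldt m * real (n div m)) = (\<Sum>m\<le>n. mangoldt m * real (n div m))"
    by (simp add: sum.atMost_Suc)
  also have "(\<Sum>m\<le>Suc n. if m dvd Suc n then mangoldt m else 0) = (\<Sum>d | d dvd Suc n. mangoldt d :: real)"
    by (subst sum.inter_filter[symmetric]) (auto intro!: sum.cong dest: dvd_imp_le)
  also have "\<dots> = ln (real (Suc n))" using mangoldt_sum[of "Suc n", where 'a=real] by simp
  finally show ?case using Suc by (simp add: ln_mult add.commute)
qed

definition chf :: "nat \<Rightarrow> int" where
  "chf j = int j - int (j div 2) - int (j div 3) - int (j div 5) + int (j div 30)"

lemma chf_mod: "chf j = chf (j mod 30)"
proof -
  obtain q r where j: "j = 30 * q + r" and r: "r < 30"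
    using div_mod_decomp[of j 30] by (metis mod_less_divisor zero_less_numeral mult.commute)
  have "(30 * q + r) div 2 = 15 * q + r div 2" by simp
  moreover have "(30 * q + r) div 3 = 10 * q + r div 3" by simp
  moreover have "(30 * q + r) div 5 = 6 * q + r div 5" by simp
  moreover have "(30 * q + r) div 30 = q + r div 30" by simp
  ultimately have "chf j = chf r" unfolding j chf_def by simp
  moreover have "j mod 30 = r" using j r by simp
  ultimately show ?thesis by simp
qed

lemma chf_small_aux: "\<forall>r\<in>set [0..<30]. chf r \<in> {0, 1} \<and> (1 \<le> r \<and> r \<le> 5 \<longrightarrow> chf r = 1)"
  by (simp add: chf_def upt_rec)

lemma chf_small: "r < 30 \<Longrightarrow> chf r \<in> {0, 1} \<and> (1 \<le> r \<and> r \<le> 5 \<longrightarrow> chf r = 1)"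
  using chf_small_aux by simp

lemma chf_01: "chf j \<in> {0, 1}"
  using chf_small[of "j mod 30"] chf_mod[of j] by simp

lemma chf_one: "1 \<le> j \<Longrightarrow> j \<le> 5 \<Longrightarrow> chf j = 1"
  using chf_small[of j] by simp

lemma ln_fact_div:
  assumes "d > 0"
  shows "ln (fact (n div d) :: real) = (\<Sum>m\<le>n. mangoldt m * real ((n div m) div d))"
proof -
  have "ln (fact (n div d) :: real) = (\<Sum>m\<le>n div d. mangoldt m * real ((n div d) div m))"
    by (rule ln_fact_mangoldt)
  also have "\<dots> = (\<Sum>m\<le>n. mangoldt m * real ((n div d) div m))"
  proof (rule sum.mono_neutral_left)
    show "{..n div d} \<subseteq> {..n}" by (auto intro: le_trans[OF _ div_le_dividend])
    show "\<forall>i\<in>{..n} - {..n div d}. mangoldt i * real (n div d div i) = 0"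
      by (auto intro!: div_less)
  qed simp
  also have "\<dots> = (\<Sum>m\<le>n. mangoldt m * real ((n div m) div d))"
    by (intro sum.cong refl) (simp add: div_mult2_eq[symmetric] mult.commute)
  finally show ?thesis .
qed

definition psi :: "nat \<Rightarrow> real" where "psi n = (\<Sum>m\<le>n. mangoldt m)"

definition chT :: "nat \<Rightarrow> real" where
  "chT n = ln (fact n) - ln (fact (n div 2)) - ln (fact (n div 3)) - ln (fact (n div 5)) + ln (fact (n div 30))"

lemma chT_sum: "chT n = (\<Sum>m\<le>n. mangoldt m * real_of_int (chf (n div m)))"
proof -
  have "chT n = (\<Sum>m\<le>n. mangoldt m * real (n div m)) - (\<Sum>m\<le>n. mangoldt m * real ((n div m) div 2))
     - (\<Sum>m\<le>n. mangoldt m * real ((n div m) div 3)) - (\<Sum>m\<le>n. mangoldt m * real ((n div m) div 5))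
     + (\<Sum>m\<le>n. mangoldt m * real ((n div m) div 30))"
    unfolding chT_def ln_fact_mangoldt[of n] ln_fact_div[of 2 n, simplified] ln_fact_div[of 3 n, simplified]
      ln_fact_div[of 5 n, simplified] ln_fact_div[of 30 n, simplified] ..
  also have "\<dots> = (\<Sum>m\<le>n. mangoldt m * real (n div m) - mangoldt m * real ((n div m) div 2)
     - mangoldt m * real ((n div m) div 3) - mangoldt m * real ((n div m) div 5)
     + mangoldt m * real ((n div m) div 30))"
    by (simp only: sum_subtractf sum.distrib)
  also have "\<dots> = (\<Sum>m\<le>n. mangoldt m * real_of_int (chf (n div m)))"
    by (intro sum.cong refl) (simp add: chf_def algebra_simps)
  finally show ?thesis .
qed

lemma chT_le_psi: "chT n \<le> psi n"
  unfolding chT_sum psi_def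
proof (rule sum_mono)
  fix m assume "m \<in> {..n}"
  show "mangoldt m * real_of_int (chf (n div m)) \<le> mangoldt m"
    using chf_01[of "n div m"] mangoldt_nonneg[of m] by auto
qed

lemma psi_le_chT: "psi n - psi (n div 6) \<le> chT n"
proof -
  have "psi n - psi (n div 6) = (\<Sum>m\<in>{..n} - {..n div 6}. mangoldt m)"
    unfolding psi_def by (subst sum_diff) auto
  also have "\<dots> = (\<Sum>m\<in>{..n} - {..n div 6}. mangoldt m * real_of_int (chf (n div m)))"
  proof (intro sum.cong refl)
    fix m assume m: "m \<in> {..n} - {..n div 6}"
    then have "n div 6 < m" "m \<le> n" by auto
    then have m0: "m > 0" by auto
    have "n < m * 6" using \<open>n div 6 < m\<close> div_less_iff_less_mult[of 6 n m] by simp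
    then have "n div m < 6" using div_less_iff_less_mult[OF m0, of n 6] by (simp add: mult.commute)
    moreover have "1 \<le> n div m" using \<open>m \<le> n\<close> m0 div_greater_zero_iff[of n m] by simp
    ultimately have "1 \<le> n div m" "n div m \<le> 5" by auto
    then show "mangoldt m = mangoldt m * real_of_int (chf (n div m))" using chf_one by simp
  qed
  also have "\<dots> \<le> chT n" unfolding chT_sum
  proof (rule sum_mono2)
    fix b show "0 \<le> mangoldt b * real_of_int (chf (n div b))"
      using chf_01[of "n div b"] mangoldt_nonneg[of b] by auto
  qed auto
  finally show ?thesis .
qed



definition chA :: real where "chA = ln 2 / 2 + ln 3 / 3 + ln 5 / 5 - ln 30 / 30"

lemma chA_ge: "chA \<ge> 1/2"
proof -
  have gen: "0<a \<Longrightarrow> 0<b \<Longrightarrow> 0<c \<Longrightarrow> 0<d \<Longrightarrow> ln(a*b*c/d) = ln a + ln b + ln c - ln d"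
    for a b c d :: real by (simp add: ln_mult ln_div)
  have "ln ((2::real)^15 * 3^10 * 5^6 / 30) = ln ((2::real)^15) + ln ((3::real)^10) + ln ((5::real)^6) - ln 30"
    by (rule gen) auto
  also have "\<dots> = 15 * ln 2 + 10 * ln 3 + 6 * ln 5 - ln 30"
    using ln_realpow[of "2::real" 15] ln_realpow[of "3::real" 10] ln_realpow[of "5::real" 6] by simp
  also have "\<dots> = 30 * chA" by (simp add: chA_def field_simps)
  finally have eq: "30 * chA = ln ((2::real)^15 * 3^10 * 5^6 / 30)" by simp
  have "exp (15::real) = exp 1 ^ 15" using exp_of_nat_mult[of 15 "1::real"] by simp
  also have "\<dots> \<le> 3 ^ 15" by (rule power_mono[OF exp_le]) simp
  also have "\<dots> \<le> (2::real)^15 * 3^10 * 5^6 / 30" by simp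
  finally have "15 \<le> ln ((2::real)^15 * 3^10 * 5^6 / 30)" by (subst ln_ge_iff) auto
  then show ?thesis using eq by simp
qed

lemma ln_diff_le: "0 < a \<Longrightarrow> a \<le> b \<Longrightarrow> ln b - ln a \<le> (b - a) / a" for a b :: real
  using ln_le_minus_one[of "b / a"] by (simp add: ln_div diff_divide_distrib)

lemma ln_diff_ge: "0 < a \<Longrightarrow> a \<le> b \<Longrightarrow> (b - a) / b \<le> ln b - ln a" for a b :: real
  using ln_le_minus_one[of "a / b"] by (simp add: ln_div diff_divide_distrib)

lemma ln_fact_bounds:
  assumes "n \<ge> 1"
  shows "real n * ln n - n \<le> ln (fact n) \<and> ln (fact n) \<le> real n * ln n - n + 1 + ln n"
  using assms
proof (induction n rule: dec_induct)
  case base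
  then show ?case by simp
next
  case (step n)
  have n: "real n \<ge> 1" using step by simp
  have f: "ln (fact (Suc n) :: real) = ln (fact n) + ln (real n + 1)"
    by (simp add: ln_mult add.commute)
  have d1: "ln (real n + 1) - ln n \<le> 1 / n" using ln_diff_le[of "real n" "real n + 1"] n by simp
  have d2: "1 / (real n + 1) \<le> ln (real n + 1) - ln n" using ln_diff_ge[of "real n" "real n + 1"] n by simp
  have l1: "real n * (ln (real n + 1) - ln n) \<le> 1" using d1 n by (simp add: field_simps)
  have l2: "1 \<le> (real n + 1) * (ln (real n + 1) - ln n)" using d2 n by (simp add: field_simps)
  show ?case using step.IH l1 l2 unfolding f by (simp add: algebra_simps)
qed

lemma ln_fact_approx:
  fixes y :: real and m :: nat
  assumes "1 \<le> m" "real m \<le> y" "y < real m + 1"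
  shows "\<bar>ln (fact m) - (y * ln y - y)\<bar> \<le> ln y + 1"
proof -
  have m: "real m \<ge> 1" using assms by simp
  have y: "y \<ge> 1" using assms by simp
  have lm: "ln m \<le> ln y" using m assms by simp
  have lny: "ln y \<ge> 0" using y by simp
  have a: "y * ln y - real m * ln m \<ge> y - m"
  proof -
    have "(y - m) / y \<le> ln y - ln m" using ln_diff_ge[of "real m" y] m assms by simp
    then have "y - m \<le> y * (ln y - ln m)" using y by (simp add: field_simps)
    moreover have "0 \<le> (y - m) * ln m" using assms m by simp
    ultimately show ?thesis by (simp add: algebra_simps)
  qed
  have b: "y * ln y - real m * ln m \<le> (y - m) + (y - m) * ln y"
  proof -
    have "ln y - ln m \<le> (y - m) / m" using ln_diff_le[of "real m" y] m assms by simp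
    then have "m * (ln y - ln m) \<le> y - m" using m by (simp add: field_simps)
    then show ?thesis by (simp add: algebra_simps)
  qed
  have c: "(y - m) * ln y \<le> ln y" using assms lny by (intro mult_left_le_one_le) auto
  show ?thesis using ln_fact_bounds[OF assms(1)] a b c lm by (simp add: abs_le_iff)
qed


lemma div_real_bounds:
  assumes "d > 0"
  shows "real (n div d) \<le> real n / real d" "real n / real d < real (n div d) + 1"
proof -
  have eq: "real n = real d * real (n div d) + real (n mod d)"
  proof -
    have "real n = real (d * (n div d) + n mod d)" by (simp only: mult_div_mod_eq)
    also have "\<dots> = real d * real (n div d) + real (n mod d)" by (simp only: of_nat_add of_nat_mult)
    finally show ?thesis .
  qed
  have "n mod d < d" using assms by simp
  then have r: "real (n mod d) < real d" by simp
  have d: "real d > 0" using assms by simp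
  show "real (n div d) \<le> real n / real d"
    using d by (subst pos_le_divide_eq) (simp_all add: eq mult.commute)
  show "real n / real d < real (n div d) + 1"
    using d r by (subst pos_divide_less_eq) (simp_all add: eq algebra_simps)
qed

lemma ln_fact_div_approx:
  assumes "d > 0" "n div d \<ge> 1"
  shows "\<bar>ln (fact (n div d)) - (real n / d * ln (real n / d) - real n / d)\<bar> \<le> ln n + 1"
proof -
  have "\<bar>ln (fact (n div d)) - (real n / d * ln (real n / d) - real n / d)\<bar> \<le> ln (real n / d) + 1"
    using div_real_bounds[OF assms(1), of n] assms by (intro ln_fact_approx) auto
  also have "ln (real n / d) \<le> ln n"
  proof -
    have "n \<ge> d" using assms div_greater_zero_iff[of n d] by simp
    then have "real n / d \<le> real n" "0 < real n / d" using assms by (auto simp: field_simps)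
    then show ?thesis by simp
  qed
  finally show ?thesis by simp
qed

lemma G_identity:
  assumes "x > 0"
  shows "(x * ln x - x) - (x/2 * ln (x/2) - x/2) - (x/3 * ln (x/3) - x/3) - (x/5 * ln (x/5) - x/5)
     + (x/30 * ln (x/30) - x/30) = chA * x"
proof -
  have "ln (x/2) = ln x - ln 2" "ln (x/3) = ln x - ln 3" "ln (x/5) = ln x - ln 5" "ln (x/30) = ln x - ln 30"
    using assms by (simp_all add: ln_div)
  then show ?thesis unfolding chA_def by (simp only:) (simp add: algebra_simps add_divide_distrib diff_divide_distrib)
qed

lemma chT_approx:
  assumes "n \<ge> 30"
  shows "\<bar>chT n - chA * n\<bar> \<le> 5 * (ln n + 1)"
proof -
  have n: "real n > 0" using assms by simp
  have h: "\<bar>ln (fact (n div d)) - (real n / d * ln (real n / d) - real n / d)\<bar> \<le> ln n + 1"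
    if "d \<in> {1,2,3,5,30}" for d :: nat
  proof (rule ln_fact_div_approx)
    show "d > 0" using that by auto
    have "n div 30 \<le> n div d" using that by (auto intro: div_le_mono2)
    moreover have "1 \<le> n div 30" using assms by simp
    ultimately show "n div d \<ge> 1" by simp
  qed
  have h1: "\<bar>ln (fact n) - (real n * ln n - n)\<bar> \<le> ln n + 1" using h[of 1] by simp
  have h2: "\<bar>ln (fact (n div 2)) - (real n / 2 * ln (real n / 2) - real n / 2)\<bar> \<le> ln n + 1" using h[of 2] by simp
  have h3: "\<bar>ln (fact (n div 3)) - (real n / 3 * ln (real n / 3) - real n / 3)\<bar> \<le> ln n + 1" using h[of 3] by simp
  have h5: "\<bar>ln (fact (n div 5)) - (real n / 5 * ln (real n / 5) - real n / 5)\<bar> \<le> ln n + 1" using h[of 5] by simp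
  have h30: "\<bar>ln (fact (n div 30)) - (real n / 30 * ln (real n / 30) - real n / 30)\<bar> \<le> ln n + 1" using h[of 30] by simp
  have "chT n - chA * n = (ln (fact n) - (real n * ln n - n)) - (ln (fact (n div 2)) - (real n / 2 * ln (real n / 2) - real n / 2))
     - (ln (fact (n div 3)) - (real n / 3 * ln (real n / 3) - real n / 3))
     - (ln (fact (n div 5)) - (real n / 5 * ln (real n / 5) - real n / 5))
     + (ln (fact (n div 30)) - (real n / 30 * ln (real n / 30) - real n / 30))"
    using G_identity[OF n] unfolding chT_def by linarith
  moreover have "\<bar>a - b - c - d + e\<bar> \<le> 5 * L" if "\<bar>a\<bar> \<le> L" "\<bar>b\<bar> \<le> L" "\<bar>c\<bar> \<le> L"
    "\<bar>d\<bar> \<le> L" "\<bar>e\<bar> \<le> L" for a b c d e L :: real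
    using that by (simp add: abs_le_iff)
  ultimately show ?thesis using h1 h2 h3 h5 h30 by metis
qed


lemma psi_mono: "m \<le> n \<Longrightarrow> psi m \<le> psi n"
  unfolding psi_def by (rule sum_mono2) (auto simp: mangoldt_nonneg)

lemma psi_nonneg: "psi n \<ge> 0"
  unfolding psi_def by (rule sum_nonneg) (simp add: mangoldt_nonneg)

lemma psi_lower: "n \<ge> 30 \<Longrightarrow> psi n \<ge> chA * n - 5 * (ln n + 1)"
  using chT_approx[of n] chT_le_psi[of n] by (simp add: abs_le_iff)

lemma chA_pos: "chA > 0" using chA_ge by simp

lemma psi_upper: "\<exists>B. \<forall>n. psi n \<le> 3/2 * chA * n + B"
proof -
  have ev: "eventually (\<lambda>x::real. 5*(ln x+1) \<le> x/8) at_top" by real_asymp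
  then have "eventually (\<lambda>n::nat. 5*(ln (real n)+1) \<le> real n/8) sequentially"
    using filterlim_real_sequentially eventually_compose_filterlim by blast
  then obtain n1 where n1: "\<And>n. n \<ge> n1 \<Longrightarrow> 5*(ln (real n)+1) \<le> real n/8"
    by (auto simp: eventually_sequentially)
  define n2 where "n2 = max n1 30"
  have "psi n \<le> 3/2 * chA * n + psi n2" for n
  proof (induction n rule: less_induct)
    case (less n)
    show ?case
    proof (cases "n \<le> n2")
      case True
      have "0 \<le> 3/2 * chA * real n" using chA_pos by simp
      then show ?thesis using psi_mono[OF True] by linarith
    next
      case False
      then have n30: "n \<ge> 30" and nn1: "n \<ge> n1" unfolding n2_def by auto
      have "n div 6 < n" using n30 by simp
      then have IH: "psi (n div 6) \<le> 3/2 * chA * real (n div 6) + psi n2" by (rule less.IH)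
      have d6: "real (n div 6) \<le> real n / 6" using div_real_bounds[of 6 n] by simp
      have "psi n \<le> chT n + psi (n div 6)" using psi_le_chT[of n] by simp
      also have "\<dots> \<le> chA * n + 5 * (ln n + 1) + (3/2 * chA * real (n div 6) + psi n2)"
        using chT_approx[OF n30] IH by (simp add: abs_le_iff)
      also have "\<dots> \<le> chA * n + 5 * (ln n + 1) + (chA * n / 4 + psi n2)"
        using d6 chA_pos by (simp add: mult_left_mono)
      also have "\<dots> \<le> 3/2 * chA * n + psi n2"
      proof -
        have "real n \<le> (2 * chA) * real n" using chA_ge mult_right_mono[of 1 "2*chA" "real n"] by simp
        then show ?thesis using n1[OF nn1] by (simp add: field_simps)
      qed
      finally show ?thesis .
    qed
  qed
  then show ?thesis by blast
qed


lemma psi_diff: "n \<le> y \<Longrightarrow> psi y - psi n = (\<Sum>m\<in>{n<..y}. mangoldt m)"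
proof -
  assume "n \<le> y"
  then have "{n<..y} = {..y} - {..n}" by auto
  then show ?thesis unfolding psi_def using \<open>n \<le> y\<close> by (simp add: sum_diff)
qed

lemma nonprime_primepow_card:
  assumes "y < 2 * n"
  shows "real (card {m\<in>{n<..y}. primepow m \<and> \<not> prime m}) \<le> sqrt (real y) + 1"
proof -
  define PP where "PP = {m\<in>{n<..y}. primepow m \<and> \<not> prime m}"
  define s where "s = nat \<lfloor>sqrt (real y)\<rfloor>"
  have rep: "\<exists>p k. prime p \<and> k \<ge> 2 \<and> m = p ^ k" if "m \<in> PP" for m
  proof -
    from that obtain p k where pk: "prime p" "k > 0" "m = p ^ k" unfolding PP_def primepow_def by auto
    have "k \<noteq> 1" using that pk unfolding PP_def by auto
    then show ?thesis using pk by (intro exI[of _ p] exI[of _ k]) auto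
  qed
  have inj: "inj_on aprimedivisor PP"
  proof (rule inj_onI)
    fix m1 m2 assume m1: "m1 \<in> PP" and m2: "m2 \<in> PP" and eq: "aprimedivisor m1 = aprimedivisor m2"
    obtain p1 k1 where 1: "prime p1" "k1 \<ge> 2" "m1 = p1 ^ k1" using rep[OF m1] by auto
    obtain p2 k2 where 2: "prime p2" "k2 \<ge> 2" "m2 = p2 ^ k2" using rep[OF m2] by auto
    have "p1 = p2" using eq 1 2 by (simp add: aprimedivisor_prime_power)
    have b1: "n < m1" "m1 \<le> y" and b2: "n < m2" "m2 \<le> y" using m1 m2 unfolding PP_def by auto
    have p2: "p1 \<ge> 2" using 1 prime_ge_2_nat by blast
    have "False" if "ka < kb" "n < p1 ^ ka" "p1 ^ kb \<le> y" for ka kb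
    proof -
      have "2 * p1 ^ ka \<le> p1 ^ Suc ka" using p2 by simp
      also have "\<dots> \<le> p1 ^ kb" using that p2 by (intro power_increasing) auto
      finally show False using that assms by linarith
    qed
    then have "k1 = k2" using b1 b2 1 2 \<open>p1 = p2\<close> by (metis linorder_neqE_nat)
    then show "m1 = m2" using 1 2 \<open>p1 = p2\<close> by simp
  qed
  have img: "aprimedivisor ` PP \<subseteq> {..s}"
  proof
    fix q assume "q \<in> aprimedivisor ` PP"
    then obtain m where m: "m \<in> PP" "q = aprimedivisor m" by auto
    obtain p k where pk: "prime p" "k \<ge> 2" "m = p ^ k" using rep[OF m(1)] by auto
    have q: "q = p" using m pk by (simp add: aprimedivisor_prime_power)
    have "p ^ 2 \<le> p ^ k" using pk prime_gt_0_nat[of p] by (intro power_increasing) auto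
    also have "\<dots> \<le> y" using m pk unfolding PP_def by auto
    finally have "real p ^ 2 \<le> real y" by (metis of_nat_le_iff of_nat_power)
    then have "real p \<le> sqrt (real y)" by (rule real_le_rsqrt)
    then have "int p \<le> \<lfloor>sqrt (real y)\<rfloor>" by (simp add: le_floor_iff)
    then show "q \<in> {..s}" unfolding s_def q by simp
  qed
  have "card PP = card (aprimedivisor ` PP)" using inj by (simp add: card_image)
  also have "\<dots> \<le> card {..s}" using img by (intro card_mono) auto
  finally have "card PP \<le> s + 1" by simp
  moreover have "real s \<le> sqrt (real y)" unfolding s_def by simp
  ultimately show ?thesis unfolding PP_def by linarith
qed

lemma psi_diff_upper:
  assumes "y < 2 * n" "n \<le> y" "n \<ge> 1"
  shows "psi y - psi n \<le> (real (card {p. prime p \<and> n < p \<and> p \<le> y}) + sqrt (real y) + 1) * ln y"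
proof -
  define P where "P = {p. prime p \<and> n < p \<and> p \<le> y}"
  define PP where "PP = {m\<in>{n<..y}. primepow m \<and> \<not> prime m}"
  have y1: "real y \<ge> 1" using assms by simp
  have le: "mangoldt m \<le> ln (real y)" if "m \<in> {n<..y}" for m
  proof -
    have "mangoldt m \<le> ln (real m)" using that by (intro mangoldt_le) auto
    also have "\<dots> \<le> ln (real y)" using that by auto
    finally show ?thesis .
  qed
  have "psi y - psi n = (\<Sum>m\<in>{n<..y}. mangoldt m)" using psi_diff assms by simp
  also have "\<dots> \<le> (\<Sum>m\<in>{n<..y}. (if m \<in> P \<union> PP then ln (real y) else 0))"
  proof (rule sum_mono)
    fix m assume m: "m \<in> {n<..y}"
    show "mangoldt m \<le> (if m \<in> P \<union> PP then ln (real y) else 0)"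
    proof (cases "m \<in> P \<union> PP")
      case True then show ?thesis using le[OF m] by simp
    next
      case False
      then have "\<not> primepow m" using m unfolding P_def PP_def by auto
      then show ?thesis using False by (simp add: mangoldt_def)
    qed
  qed
  also have "\<dots> = (\<Sum>m\<in>P \<union> PP. ln (real y))"
  proof -
    have "P \<union> PP \<subseteq> {n<..y}" unfolding P_def PP_def by auto
    then have "{n<..y} \<inter> (P \<union> PP) = P \<union> PP" by auto
    moreover have "(\<Sum>m\<in>{n<..y}. (if m \<in> P \<union> PP then ln (real y) else 0)) = (\<Sum>m\<in>{n<..y} \<inter> (P \<union> PP). ln (real y))"
      by (rule sum.inter_restrict[symmetric]) simp
    ultimately show ?thesis by simp
  qed
  also have "\<dots> = real (card (P \<union> PP)) * ln (real y)" by simp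
  also have "\<dots> \<le> (real (card P) + real (card PP)) * ln (real y)"
  proof (rule mult_right_mono)
    have "card (P \<union> PP) \<le> card P + card PP" by (rule card_Un_le)
    then show "real (card (P \<union> PP)) \<le> real (card P) + real (card PP)" by linarith
  qed (use y1 in simp)
  also have "\<dots> \<le> (real (card P) + sqrt (real y) + 1) * ln (real y)"
    using nonprime_primepow_card[OF assms(1)] y1 unfolding PP_def by (intro mult_right_mono) auto
  finally show ?thesis unfolding P_def .
qed


lemma prime_count_ev:
  "eventually (\<lambda>n. real (card {p. prime p \<and> n < p \<and> p \<le> 29*n div 20}) \<ge> 4*(2*ln(2*real n)+1)^k + C) sequentially"
proof -
  obtain B where B: "\<And>n. psi n \<le> 3/2 * chA * n + B" using psi_upper by blast
  have ev1: "eventually (\<lambda>x::real. (x/10 - 10 * ln(2*x) - 11 - B)/ln(2*x) - sqrt(2*x) - 1 \<ge> 4*(2*ln(2*x)+1)^k + C) at_top"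
    by real_asymp
  have ev2: "eventually (\<lambda>x::real. x/10 - 10 * ln(2*x) - 11 - B \<ge> 0) at_top"
    by real_asymp
  have ev12: "eventually (\<lambda>n::nat. (real n/10 - 10 * ln(2*real n) - 11 - B)/ln(2*real n) - sqrt(2*real n) - 1 \<ge> 4*(2*ln(2*real n)+1)^k + C
       \<and> real n/10 - 10 * ln(2*real n) - 11 - B \<ge> 0) sequentially"
    using eventually_conj[OF ev1 ev2] filterlim_real_sequentially eventually_compose_filterlim by blast
  moreover have "eventually (\<lambda>n::nat. n \<ge> 100) sequentially" by (rule eventually_ge_at_top)
  ultimately show ?thesis
  proof eventually_elim
    case (elim n)
    define y where "y = 29*n div 20"
    define G where "G = real n/10 - 10 * ln(2*real n) - 11 - B"
    define c where "c = real (card {p. prime p \<and> n < p \<and> p \<le> y})"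
    have n100: "n \<ge> 100" using elim by simp
    have yb1: "real y \<le> 29 * real n / 20" using div_real_bounds[of 20 "29*n"] unfolding y_def by simp
    have yb2: "29 * real n / 20 < real y + 1" using div_real_bounds[of 20 "29*n"] unfolding y_def by simp
    have y2n: "y < 2 * n" using yb1 n100 by linarith
    have ny: "n \<le> y" using yb2 n100 by linarith
    have y30: "y \<ge> 30" using ny n100 by linarith
    have lny: "ln (real y) \<le> ln (2 * real n)" "0 < ln (real y)" using y2n y30 by auto
    have lnn: "ln (real n) \<le> ln (2 * real n)" using n100 by simp
    have lo: "psi y \<ge> chA * y - 5 * (ln y + 1)" by (rule psi_lower[OF y30])
    have d6: "real (n div 6) \<le> real n / 6" using div_real_bounds[of 6 n] by simp
    have "psi n \<le> chT n + psi (n div 6)" using psi_le_chT[of n] by simp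
    also have "\<dots> \<le> chA * n + 5 * (ln n + 1) + (3/2 * chA * real (n div 6) + B)"
      using chT_approx[of n] n100 B[of "n div 6"] by (simp add: abs_le_iff)
    also have "\<dots> \<le> chA * n + 5 * (ln n + 1) + (chA * n / 4 + B)"
      using d6 chA_pos by (simp add: mult_left_mono)
    finally have up: "psi n \<le> chA * n + 5 * (ln n + 1) + (chA * n / 4 + B)" .
    have A1: "chA * (real n / 5 - 1) \<ge> (real n / 5 - 1) / 2"
      using chA_ge n100 mult_right_mono[of "1/2" chA "real n / 5 - 1"] by simp
    have A2: "chA * real y - chA * real n - chA * real n / 4 \<ge> chA * (real n / 5 - 1)"
    proof -
      have "real y - real n - real n / 4 \<ge> real n / 5 - 1" using yb2 by simp
      then have "chA * (real y - real n - real n / 4) \<ge> chA * (real n / 5 - 1)"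
        using chA_pos by (intro mult_left_mono) auto
      then show ?thesis by (simp add: algebra_simps)
    qed
    have A3: "real n / 10 - 1/2 = (real n/5 - 1)/2" by simp
    have K: "chA * real y - chA * real n - chA * real n / 4 \<ge> real n / 10 - 1/2"
      unfolding A3 using A1 A2 by (rule order_trans)
    have D: "psi y - psi n \<ge> G" unfolding G_def
    proof -
      have "psi y - psi n \<ge> (chA * real y - chA * real n - chA * real n / 4) - 5 * ln y - 5 * ln n - 10 - B"
        using lo up by (simp add: algebra_simps)
      then show "psi y - psi n \<ge> real n/10 - 10 * ln(2*real n) - 11 - B" using K lny lnn by linarith
    qed
    have G0: "G \<ge> 0" using elim unfolding G_def by simp
    have U: "psi y - psi n \<le> (c + sqrt (real y) + 1) * ln y"
      using psi_diff_upper[OF y2n ny] n100 unfolding c_def by simp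
    have "G \<le> (c + sqrt (real y) + 1) * ln y" using D U by linarith
    then have "G / ln y \<le> c + sqrt (real y) + 1" using lny by (simp add: divide_le_eq)
    moreover have "G / ln (2 * real n) \<le> G / ln y" using G0 lny by (intro divide_left_mono) auto
    moreover have "sqrt (real y) \<le> sqrt (2 * real n)" using y2n by simp
    ultimately have "c \<ge> G / ln (2 * real n) - sqrt (2 * real n) - 1" by linarith
    then show ?case using elim unfolding c_def y_def G_def by linarith
  qed
qed



lemma ln2_ge_half: "ln (2::real) \<ge> 1/2"
proof -
  have "exp (1/2::real) ^ 2 = exp 1" by (simp add: exp_of_nat_mult[symmetric])
  also have "\<dots> \<le> 2 ^ 2" using exp_le by simp
  finally have "exp (1/2::real) \<le> 2" by (rule power2_le_imp_le) simp
  then show ?thesis by (subst ln_ge_iff) auto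
qed

lemma smooth_card:
  fixes M :: "nat set" and K :: nat
  assumes M: "finite M" "\<forall>q\<in>M. prime q" and K: "K \<ge> 1"
  shows "real (card {t\<in>{1..K}. \<forall>p. prime p \<longrightarrow> p dvd t \<longrightarrow> p \<in> M}) \<le> (2 * ln (real K) + 1) ^ card M"
proof -
  define Sm where "Sm = {t\<in>{1..K}. \<forall>p. prime p \<longrightarrow> p dvd t \<longrightarrow> p \<in> M}"
  define E where "E = nat \<lfloor>2 * ln (real K)\<rfloor>"
  define h where "h t = restrict (\<lambda>q. multiplicity q t) M" for t :: nat
  have hin: "h t \<in> PiE M (\<lambda>_. {..E})" if t: "t \<in> Sm" for t
  proof -
    have "multiplicity q t \<le> E" if q: "q \<in> M" for q
    proof -
      have qp: "prime q" using M q by auto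
      then have q2: "q \<ge> 2" by (simp add: prime_ge_2_nat)
      have tpos: "t > 0" using t unfolding Sm_def by auto
      have "q ^ multiplicity q t \<le> t" using tpos by (intro dvd_imp_le[OF multiplicity_dvd]) auto
      moreover have "2 ^ multiplicity q t \<le> q ^ multiplicity q t" using q2 by (intro power_mono) auto
      moreover have "t \<le> K" using t unfolding Sm_def by auto
      ultimately have "2 ^ multiplicity q t \<le> K" by linarith
      then have "(2::real) ^ multiplicity q t \<le> real K" by (metis of_nat_le_iff of_nat_numeral of_nat_power)
      then have "ln ((2::real) ^ multiplicity q t) \<le> ln (real K)" using K by (subst ln_le_cancel_iff) auto
      then have "real (multiplicity q t) * ln 2 \<le> ln (real K)" by (simp add: ln_realpow)
      moreover have "real (multiplicity q t) * (1/2) \<le> real (multiplicity q t) * ln 2"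
        using ln2_ge_half by (intro mult_left_mono) auto
      ultimately have "real (multiplicity q t) \<le> 2 * ln (real K)" by linarith
      then show ?thesis unfolding E_def by linarith
    qed
    then show ?thesis unfolding h_def by auto
  qed
  have inj: "inj_on h Sm"
  proof (rule inj_onI)
    fix t1 t2 assume t1: "t1 \<in> Sm" and t2: "t2 \<in> Sm" and eq: "h t1 = h t2"
    show "t1 = t2"
    proof (rule multiplicity_eq_nat)
      show "t1 > 0" "t2 > 0" using t1 t2 unfolding Sm_def by auto
      fix p :: nat assume p: "prime p"
      show "multiplicity p t1 = multiplicity p t2"
      proof (cases "p \<in> M")
        case True
        then show ?thesis using fun_cong[OF eq, of p] unfolding h_def by simp
      next
        case False
        then have "\<not> p dvd t1" "\<not> p dvd t2" using t1 t2 p unfolding Sm_def by auto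
        then show ?thesis by (simp add: not_dvd_imp_multiplicity_0)
      qed
    qed
  qed
  have "card Sm \<le> card (PiE M (\<lambda>_. {..E}))"
    using inj hin by (intro card_inj_on_le) (auto simp: M finite_PiE)
  also have "\<dots> = (E + 1) ^ card M" using M by (simp add: card_PiE)
  finally have "real (card Sm) \<le> real (E + 1) ^ card M" by (metis of_nat_le_iff of_nat_power)
  also have "\<dots> \<le> (2 * ln (real K) + 1) ^ card M"
  proof (rule power_mono)
    have "0 \<le> 2 * ln (real K)" using K by simp
    then show "real (E + 1) \<le> 2 * ln (real K) + 1" unfolding E_def by linarith
  qed simp
  finally show ?thesis unfolding Sm_def .
qed


lemma crt_primes:
  fixes U :: "nat set" and r :: "nat \<Rightarrow> int"
  assumes "finite U" "\<forall>p\<in>U. prime p"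
  shows "\<exists>x::int. \<forall>p\<in>U. int p dvd x - r p"
proof -
  define u where "u p = nat (r p mod int p)" for p
  have "\<exists>x. \<forall>i\<in>U. [x = u i] (mod id i)"
    by (rule chinese_remainder_nat) (use assms in \<open>auto intro: primes_coprime\<close>)
  then obtain x where x: "\<forall>i\<in>U. [x = u i] (mod i)" by auto
  show ?thesis
  proof (intro exI[of _ "int x"] ballI)
    fix p assume p: "p \<in> U"
    then have pp: "int p > 0" using assms prime_gt_0_nat by auto
    have "[int x = int (u p)] (mod int p)" using x p by (simp add: cong_int_iff)
    moreover have "int (u p) = r p mod int p" unfolding u_def using pp by simp
    moreover have "[r p mod int p = r p] (mod int p)" by simp
    ultimately have "[int x = r p] (mod int p)" by (metis cong_trans)
    then show "int p dvd int x - r p" by (simp add: cong_iff_dvd_diff)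
  qed
qed

lemma construct:
  fixes M :: "nat set" and K L :: nat and Dc Qc :: "nat set" and p0 :: nat
  defines "S \<equiv> {t::int. - int K \<le> t \<and> t \<le> int L \<and> t \<noteq> 0 \<and> (\<forall>p. prime p \<longrightarrow> int p dvd t \<longrightarrow> p \<in> M)}"
  assumes LK: "K \<le> L + 1" "L \<le> K"
    and Dc: "finite Dc" "\<forall>d\<in>Dc. prime d \<and> d \<notin> M \<and> K < 2 * d \<and> d \<le> K" "card S \<le> card Dc"
    and Qc: "finite Qc" "\<forall>q\<in>Qc. prime q \<and> q \<notin> M \<and> K < q" "\<forall>q\<in>Qc. \<forall>d\<in>Dc. q \<le> L + d"
       "2 * card S \<le> card Qc"
    and p0: "prime p0" "p0 \<notin> M" "p0 \<le> L" "p0 \<notin> Dc"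
  shows "\<exists>a::int. \<forall>t. - int K \<le> t \<and> t \<le> int L \<longrightarrow>
           (\<exists>p. prime p \<and> p \<notin> M \<and> int p dvd a + t \<and> (- int K \<le> t - int p \<or> t + int p \<le> int L))"
proof -
  have finS: "finite S" unfolding S_def by (rule finite_subset[of _ "{- int K..int L}"]) auto
  obtain dm where dm: "dm ` S \<subseteq> Dc" "inj_on dm S" using card_le_inj[OF finS Dc(1) Dc(3)] by auto
  define D where "D = dm ` S"
  have DDc: "D \<subseteq> Dc" using dm unfolding D_def by simp
  have cardD: "card D = card S" unfolding D_def using dm by (simp add: card_image)
  define E where "E = {t::int. - int K \<le> t \<and> t \<le> int L \<and> (\<exists>d\<in>D. t = int d \<or> t = - int d)}"
  have finD: "finite D" unfolding D_def using finS by simp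
  have ES: "E \<subseteq> int ` D \<union> (\<lambda>d. - int d) ` D" unfolding E_def by auto
  have finE: "finite E" using finite_subset[OF ES] finD by blast
  have "card E \<le> card (int ` D \<union> (\<lambda>d. - int d) ` D)" using ES finD by (intro card_mono) auto
  also have "\<dots> \<le> card (int ` D) + card ((\<lambda>d. - int d) ` D)" by (rule card_Un_le)
  also have "\<dots> \<le> card D + card D" by (intro add_mono card_image_le finD)
  finally have cardE: "card E \<le> card Qc" using cardD Qc(4) by simp
  obtain qm where qm: "qm ` E \<subseteq> Qc" "inj_on qm E" using card_le_inj[OF finE Qc(1) cardE] by auto
  define Q where "Q = qm ` E"
  define P0 where "P0 = {p. prime p \<and> p \<notin> M \<and> p \<le> K \<and> p \<notin> D}"
  define U where "U = P0 \<union> D \<union> Q"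
  define res where "res p = (if p \<in> D then - inv_into S dm p else if p \<in> Q then - inv_into E qm p else 0)" for p
  have finU: "finite U" unfolding U_def P0_def Q_def using finD finE by (auto intro: finite_subset[of _ "{..K}"])
  have primeU: "\<forall>p\<in>U. prime p" unfolding U_def P0_def Q_def using DDc Dc(2) qm(1) Qc(2) by auto
  obtain a where a: "\<forall>p\<in>U. int p dvd a - res p" using crt_primes[OF finU primeU] by blast
  have key: "int p dvd a + t" if "p \<in> U" "int p dvd res p + t" for p t
  proof -
    have "a + t = (a - res p) + (res p + t)" by simp
    then show ?thesis using a that by (metis dvd_add)
  qed
  have QK: "q > K" if "q \<in> Q" for q using that qm(1) Qc(2) unfolding Q_def by auto
  have DK: "d \<le> K" "K < 2 * d" "prime d" "d \<notin> M" if "d \<in> D" for d using that DDc Dc(2) by auto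
  show ?thesis
  proof (intro exI[of _ a] allI impI)
    fix t :: int assume t: "- int K \<le> t \<and> t \<le> int L"
    show "\<exists>p. prime p \<and> p \<notin> M \<and> int p dvd a + t \<and> (- int K \<le> t - int p \<or> t + int p \<le> int L)"
    proof (cases "t \<in> S")
      case True
      define d where "d = dm t"
      have dD: "d \<in> D" unfolding d_def D_def using True by simp
      have "inv_into S dm d = t" unfolding d_def using True dm(2) by (simp add: inv_into_f_f)
      then have "res d = - t" unfolding res_def using dD by simp
      then have "int d dvd a + t" using key[of d t] dD unfolding U_def by simp
      moreover have "- int K \<le> t - int d \<or> t + int d \<le> int L" using DK[OF dD] t LK by linarith
      ultimately show ?thesis using DK[OF dD] by blast
    next
      case notS: False
      show ?thesis
      proof (cases "t \<in> E")
        case True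
        define q where "q = qm t"
        have qQ: "q \<in> Q" unfolding q_def Q_def using True by simp
        have qQc: "q \<in> Qc" using qQ qm(1) unfolding Q_def by auto
        have "q \<notin> D"
        proof
          assume "q \<in> D" then have "q \<le> K" using DK by auto
          then show False using QK[OF qQ] by simp
        qed
        moreover have "inv_into E qm q = t" unfolding q_def using True qm(2) by (simp add: inv_into_f_f)
        ultimately have "res q = - t" unfolding res_def using qQ by simp
        then have "int q dvd a + t" using key[of q t] qQ unfolding U_def by simp
        moreover obtain d where d: "d \<in> D" "t = int d \<or> t = - int d" using True unfolding E_def by auto
        have "q \<le> L + d" using Qc(3) qQc DDc d(1) by auto
        then have "- int K \<le> t - int q \<or> t + int q \<le> int L" using d(2) DK[OF d(1)] t LK by linarith
        ultimately show ?thesis using qQc Qc(2) by blast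
      next
        case notE: False
        have resP0: "res p = 0" if "p \<in> P0" for p
        proof -
          have "p \<notin> D" "p \<le> K" using that unfolding P0_def by auto
          moreover have "p \<notin> Q" using QK \<open>p \<le> K\<close> by force
          ultimately show ?thesis unfolding res_def by simp
        qed
        show ?thesis
        proof (cases "t = 0")
          case True
          have "p0 \<in> P0" unfolding P0_def using p0 DDc LK by auto
          then have "int p0 dvd a + t" using key[of p0 t] resP0 True unfolding U_def by simp
          then show ?thesis using p0 True by auto
        next
          case False
          then obtain p where p: "prime p" "int p dvd t" "p \<notin> M" using notS t unfolding S_def by auto
          have pt: "int p \<le> \<bar>t\<bar>" using dvd_imp_le_int[OF False p(2)] by simp
          have pK: "p \<le> K" using pt t LK by linarith
          have "p \<notin> D"
          proof
            assume pD: "p \<in> D"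
            obtain j where j: "t = int p * j" using p(2) by blast
            have "j \<noteq> 0" using j False by auto
            have "\<bar>j\<bar> = 1"
            proof (rule ccontr)
              assume "\<bar>j\<bar> \<noteq> 1"
              then have "\<bar>j\<bar> \<ge> 2" using \<open>j \<noteq> 0\<close> by linarith
              then have "\<bar>t\<bar> \<ge> 2 * int p" unfolding j abs_mult using mult_left_mono[of 2 "\<bar>j\<bar>" "int p"] by (simp add: mult.commute)
              then show False using DK[OF pD] t LK by linarith
            qed
            then have "t = int p \<or> t = - int p" using j by (auto simp: abs_if split: if_splits)
            then have "t \<in> E" unfolding E_def using t pD by auto
            then show False using notE by simp
          qed
          then have pP0: "p \<in> P0" unfolding P0_def using p pK by auto
          then have "int p dvd a + t" using key[of p t] resP0 p(2) unfolding U_def by simp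
          moreover have "- int K \<le> t - int p \<or> t + int p \<le> int L" using pt t LK by linarith
          ultimately show ?thesis using p by blast
        qed
      qed
    qed
  qed
qed
lemma S_card:
  fixes M :: "nat set" and K L :: nat
  assumes "L \<le> K"
  shows "card {t::int. - int K \<le> t \<and> t \<le> int L \<and> t \<noteq> 0 \<and> (\<forall>p. prime p \<longrightarrow> int p dvd t \<longrightarrow> p \<in> M)}
         \<le> 2 * card {t\<in>{1..K}. \<forall>p. prime p \<longrightarrow> p dvd t \<longrightarrow> p \<in> M}"
proof -
  define S where "S = {t::int. - int K \<le> t \<and> t \<le> int L \<and> t \<noteq> 0 \<and> (\<forall>p. prime p \<longrightarrow> int p dvd t \<longrightarrow> p \<in> M)}"
  define Sm where "Sm = {t\<in>{1..K}. \<forall>p. prime p \<longrightarrow> p dvd t \<longrightarrow> p \<in> M}"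
  have sub: "S \<subseteq> int ` Sm \<union> (\<lambda>x. - int x) ` Sm"
  proof
    fix t assume t: "t \<in> S"
    have sm: "\<forall>p. prime p \<longrightarrow> p dvd nat \<bar>t\<bar> \<longrightarrow> p \<in> M"
    proof (intro allI impI)
      fix p :: nat assume "prime p" "p dvd nat \<bar>t\<bar>"
      then have "int p dvd t" by (metis dvd_abs_iff int_dvd_int_iff int_nat_eq abs_ge_zero)
      then show "p \<in> M" using t \<open>prime p\<close> unfolding S_def by auto
    qed
    have rng: "nat \<bar>t\<bar> \<in> {1..K}" using t assms unfolding S_def by auto
    have "nat \<bar>t\<bar> \<in> Sm" using sm rng unfolding Sm_def by auto
    show "t \<in> int ` Sm \<union> (\<lambda>x. - int x) ` Sm"
    proof (cases "t \<ge> 0")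
      case True
      then have "t = int (nat \<bar>t\<bar>)" by simp
      then show ?thesis using \<open>nat \<bar>t\<bar> \<in> Sm\<close> by (metis UnI1 image_eqI)
    next
      case False
      then have "t = - int (nat \<bar>t\<bar>)" by simp
      then show ?thesis using \<open>nat \<bar>t\<bar> \<in> Sm\<close> by (metis (no_types, lifting) UnI2 image_eqI)
    qed
  qed
  have fin: "finite Sm" unfolding Sm_def by auto
  have "card S \<le> card (int ` Sm \<union> (\<lambda>x. - int x) ` Sm)" using sub fin by (intro card_mono) auto
  also have "\<dots> \<le> card (int ` Sm) + card ((\<lambda>x. - int x) ` Sm)" by (rule card_Un_le)
  also have "\<dots> \<le> card Sm + card Sm" by (intro add_mono card_image_le fin)
  finally show ?thesis unfolding S_def Sm_def by simp
qed

theorem theorem2p2: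
  fixes M :: "nat set"
  assumes "finite M" and "M \<noteq> {}" and "\<forall>q\<in>M. prime q"
  shows "\<exists>n\<^sub>M::nat. \<forall>N\<ge>n\<^sub>M. \<exists>a::int.
           \<forall>i\<in>{0..<N}.
             \<not> coprime (a + int i) (\<Prod>j\<in>{0..<N} - {i}. a + int j) \<and>
             (\<exists>p::nat. prime p \<and> p \<notin> M \<and>
                int p dvd gcd (a + int i) (\<Prod>j\<in>{0..<N} - {i}. a + int j))"
proof -
  define k where "k = card M"
  define cnt where "cnt n = card {p. prime p \<and> n < p \<and> p \<le> 29*n div 20}" for n :: nat
  define smc where "smc K = card {t\<in>{1..K}. \<forall>p. prime p \<longrightarrow> p dvd t \<longrightarrow> p \<in> M}" for K :: nat
  have "eventually (\<lambda>n. real (cnt n) \<ge> 4*(2*ln(2*real n)+1)^k + real (card M)) sequentially"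
    unfolding cnt_def by (rule prime_count_ev)
  then obtain n1 where n1: "\<And>n. n \<ge> n1 \<Longrightarrow> real (cnt n) \<ge> 4*(2*ln(2*real n)+1)^k + real (card M)"
    by (auto simp: eventually_sequentially)
  have "\<not> finite ({p. prime p} - M)" using primes_infinite assms(1) by auto
  then have "{p. prime p} - M \<noteq> {}" by (metis infinite_imp_nonempty)
  then obtain p0 where p0: "prime p0" "p0 \<notin> M" by auto
  define K0 where "K0 = 2 * (n1 + p0 + 100)"
  have main: "\<exists>a::int. \<forall>t. - int K \<le> t \<and> t \<le> int L \<longrightarrow>
           (\<exists>p. prime p \<and> p \<notin> M \<and> int p dvd a + t \<and> (- int K \<le> t - int p \<or> t + int p \<le> int L))"
    if K: "K \<ge> K0" and LK: "K \<le> L + 1" "L \<le> K" for K L :: nat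
  proof -
    define m where "m = 20 * K div 29"
    have mK: "29 * m div 20 \<le> K" unfolding m_def by simp
    have m2: "K < 2 * m + 2" unfolding m_def by simp
    have mbig: "m \<ge> n1 + p0" using K unfolding m_def K0_def by simp
    have K2m: "K \<le> 2 * m" using K unfolding m_def K0_def by simp
    have Kbig: "K \<ge> n1" "K \<ge> 100" using K unfolding K0_def by auto
    have mL: "m \<le> L" using K LK unfolding m_def K0_def by simp
    have QL: "29 * K div 20 \<le> L + m" using K LK unfolding m_def K0_def by simp
    define Dc where "Dc = {d. prime d \<and> d \<notin> M \<and> m < d \<and> d \<le> 29 * m div 20}"
    define Qc where "Qc = {q. prime q \<and> q \<notin> M \<and> K < q \<and> q \<le> 29 * K div 20}"
    define S where "S = {t::int. - int K \<le> t \<and> t \<le> int L \<and> t \<noteq> 0 \<and> (\<forall>p. prime p \<longrightarrow> int p dvd t \<longrightarrow> p \<in> M)}"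
    have finDc: "finite Dc" unfolding Dc_def by (rule finite_subset[of _ "{..29 * m div 20}"]) auto
    have finQc: "finite Qc" unfolding Qc_def by (rule finite_subset[of _ "{..29 * K div 20}"]) auto
    have cardS: "real (card S) \<le> 2 * (2 * ln (real K) + 1) ^ k"
    proof -
      have "card S \<le> 2 * smc K" unfolding S_def smc_def by (rule S_card[OF LK(2)])
      moreover have "real (smc K) \<le> (2 * ln (real K) + 1) ^ k"
        unfolding smc_def k_def using smooth_card[OF assms(1) assms(3), of K] Kbig by simp
      ultimately show ?thesis by linarith
    qed
    have cnt_le: "cnt n \<le> card {p. prime p \<and> p \<notin> M \<and> n < p \<and> p \<le> 29*n div 20} + card M" for n
    proof -
      have "{p. prime p \<and> n < p \<and> p \<le> 29*n div 20} \<subseteq> {p. prime p \<and> p \<notin> M \<and> n < p \<and> p \<le> 29*n div 20} \<union> M"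
        by auto
      then have "cnt n \<le> card ({p. prime p \<and> p \<notin> M \<and> n < p \<and> p \<le> 29*n div 20} \<union> M)"
        unfolding cnt_def using assms(1) by (intro card_mono) (auto intro: finite_subset[of _ "{..29*n div 20}"])
      also have "\<dots> \<le> card {p. prime p \<and> p \<notin> M \<and> n < p \<and> p \<le> 29*n div 20} + card M" by (rule card_Un_le)
      finally show ?thesis .
    qed
    have lnK: "0 \<le> 2 * ln (real K) + 1" using Kbig by simp
    have cD: "card S \<le> card Dc"
    proof -
      have "real (cnt m) \<ge> 4*(2*ln(2*real m)+1)^k + real (card M)" using n1 mbig by simp
      moreover have "(2 * ln (real K) + 1) ^ k \<le> (2*ln(2*real m)+1)^k"
        using lnK K2m Kbig by (intro power_mono) auto
      moreover have "cnt m \<le> card Dc + card M" using cnt_le[of m] unfolding Dc_def by simp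
      moreover have "0 \<le> (2 * ln (real K) + 1) ^ k" using lnK by simp
      ultimately show ?thesis using cardS by linarith
    qed
    have cQ: "2 * card S \<le> card Qc"
    proof -
      have "real (cnt K) \<ge> 4*(2*ln(2*real K)+1)^k + real (card M)" using n1 Kbig by simp
      moreover have "(2 * ln (real K) + 1) ^ k \<le> (2*ln(2*real K)+1)^k"
        using lnK Kbig by (intro power_mono) auto
      moreover have "cnt K \<le> card Qc + card M" using cnt_le[of K] unfolding Qc_def by simp
      ultimately show ?thesis using cardS by linarith
    qed
    show ?thesis
    proof (rule construct[of K L Dc M Qc p0, folded S_def])
      show "K \<le> L + 1" "L \<le> K" by (fact LK)+
      show "finite Dc" "finite Qc" by (fact finDc finQc)+
      show "\<forall>d\<in>Dc. prime d \<and> d \<notin> M \<and> K < 2 * d \<and> d \<le> K" unfolding Dc_def using m2 mK by auto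
      show "card S \<le> card Dc" by (fact cD)
      show "\<forall>q\<in>Qc. prime q \<and> q \<notin> M \<and> K < q" unfolding Qc_def by auto
      show "\<forall>q\<in>Qc. \<forall>d\<in>Dc. q \<le> L + d" unfolding Qc_def Dc_def using QL by auto
      show "2 * card S \<le> card Qc" by (fact cQ)
      show "prime p0" "p0 \<notin> M" by (fact p0)+
      show "p0 \<le> L" using mL mbig by simp
      show "p0 \<notin> Dc" unfolding Dc_def using mbig by auto
    qed
  qed
  show ?thesis
  proof (intro exI[of _ "2 * K0 + 2"] allI impI)
    fix N :: nat assume N: "N \<ge> 2 * K0 + 2"
    define K where "K = N div 2"
    define L where "L = N - 1 - K"
    have KK0: "K \<ge> K0" "K \<le> L + 1" "L \<le> K" using N unfolding K_def L_def by auto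
    have NKL: "N = K + L + 1" using N unfolding K_def L_def by auto
    obtain a' where a': "\<And>t. - int K \<le> t \<and> t \<le> int L \<Longrightarrow>
           (\<exists>p. prime p \<and> p \<notin> M \<and> int p dvd a' + t \<and> (- int K \<le> t - int p \<or> t + int p \<le> int L))"
      using main[OF KK0] by blast
    define a where "a = a' - int K"
    show "\<exists>a::int. \<forall>i\<in>{0..<N}.
             \<not> coprime (a + int i) (\<Prod>j\<in>{0..<N} - {i}. a + int j) \<and>
             (\<exists>p::nat. prime p \<and> p \<notin> M \<and>
                int p dvd gcd (a + int i) (\<Prod>j\<in>{0..<N} - {i}. a + int j))"
    proof (intro exI[of _ a] ballI)
      fix i assume i: "i \<in> {0..<N}"
      define t where "t = int i - int K"
      have trng: "- int K \<le> t \<and> t \<le> int L" using i NKL unfolding t_def by auto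
      obtain p where p: "prime p" "p \<notin> M" "int p dvd a' + t" "- int K \<le> t - int p \<or> t + int p \<le> int L"
        using a'[OF trng] by blast
      have p1: "int p > 1" using p(1) prime_gt_1_nat by auto
      obtain t' where t': "- int K \<le> t' \<and> t' \<le> int L" "t' \<noteq> t" "int p dvd a' + t'"
      proof (cases "- int K \<le> t - int p")
        case True
        have "int p dvd (a' + t) - int p" using p(3) by simp
        then show ?thesis using that[of "t - int p"] True trng p1 by (simp add: algebra_simps)
      next
        case False
        then have le: "t + int p \<le> int L" using p(4) by simp
        have "int p dvd (a' + t) + int p" using p(3) by simp
        then show ?thesis using that[of "t + int p"] le trng p1 by (simp add: algebra_simps)
      qed
      define j where "j = nat (t' + int K)"
      have jN: "j \<in> {0..<N} - {i}" using t' NKL unfolding j_def t_def by auto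
      have aj: "a + int j = a' + t'" using t' unfolding j_def a_def by simp
      have ai: "a + int i = a' + t" unfolding t_def a_def by simp
      have dprod: "int p dvd (\<Prod>j\<in>{0..<N} - {i}. a + int j)"
        using dvd_trans[OF _ dvd_prodI[OF _ jN, of "\<lambda>j. a + int j"]] t'(3) aj by simp
      have dx: "int p dvd a + int i" using p(3) ai by simp
      have "\<not> coprime (a + int i) (\<Prod>j\<in>{0..<N} - {i}. a + int j)"
      proof
        assume "coprime (a + int i) (\<Prod>j\<in>{0..<N} - {i}. a + int j)"
        then have "is_unit (int p)" using coprime_common_divisor dx dprod by blast
        then show False using p1 by simp
      qed
      moreover have "int p dvd gcd (a + int i) (\<Prod>j\<in>{0..<N} - {i}. a + int j)"
        using dx dprod by simp
      ultimately show "\<not> coprime (a + int i) (\<Prod>j\<in>{0..<N} - {i}. a + int j) \<and>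
             (\<exists>p::nat. prime p \<and> p \<notin> M \<and>
                int p dvd gcd (a + int i) (\<Prod>j\<in>{0..<N} - {i}. a + int j))" using p by blast
    qed
  qed
qed

end
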